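(* For integers $n\ge2$ and $1\le l\le\lfloor n/2\rfloor$, $$p^{(H)}_n(l,n-l)=\Big(\tfrac1{\sqrt2}\Big)^{n-2l+1}(-1)^{n-l}\Big\{P^{0,n-2l}_{l-1}(0)-P^{1,n-2l}_{l-1}(0)\Big\},$$ $$q^{(H)}_n(l,n-l)=\Big(\tfrac1{\sqrt2}\Big)^{n-2l+1}(-1)^{n-l}\Big\{\Big(\frac{n-l}{l}\Big)P^{1,n-2l}_{l-1}(0)-P^{0,n-2l}_{l-1}(0)\Big\}.$$
   Context: For $\min\{l,m\}\ge1$, $n=l+m$: $p^{(H)}_n(l,m)=(1/\sqrt2)^{n-1}\sum_{\gamma=1}^{(l-1)\wedge m}(-1)^{m-\gamma}\binom{l-1}{\gamma}\binom{m-1}{\gamma-1}$ and $q^{(H)}_n(l,m)=(1/\sqrt2)^{n-1}\sum_{\gamma=1}^{l\wedge(m-1)}(-1)^{m-\gamma-1}\binom{l-1}{\gamma-1}\binom{m-1}{\gamma}$ (empty sums are $0$). $P^{\nu,\mu}_k(x)$ is the Jacobi polynomial, orthogonal on $[-1,1]$ w.r.t. $(1-x)^\nu(1+x)^\mu$, normalized by $P^{\nu,\mu}_k(x)=\frac{\Gamma(k+\nu+1)}{\Gamma(k+1)\Gamma(\nu+1)}\,{}_2F_1(-k,k+\nu+\mu+1;\nu+1;(1-x)/2)$. *)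

theory Defs
  imports "HOL-Analysis.Analysis"
begin

text \<open>p^(H)_n(l,m), intended for n = l + m and min l m \<ge> 1.\<close>
definition pH :: "nat \<Rightarrow> nat \<Rightarrow> nat \<Rightarrow> real" where
  "pH n l m = (1 / sqrt 2) ^ (n - 1) *
     (\<Sum>\<gamma> = 1..min (l - 1) m. (-1) ^ (m - \<gamma>) * real ((l - 1) choose \<gamma>) * real ((m - 1) choose (\<gamma> - 1)))"

definition qH :: "nat \<Rightarrow> nat \<Rightarrow> nat \<Rightarrow> real" where
  "qH n l m = (1 / sqrt 2) ^ (n - 1) *
     (\<Sum>\<gamma> = 1..min l (m - 1). (-1) ^ (m - \<gamma> - 1) * real ((l - 1) choose (\<gamma> - 1)) * real ((m - 1) choose \<gamma>))"

definition jacobiP :: "real \<Rightarrow> real \<Rightarrow> nat \<Rightarrow> real \<Rightarrow> real" where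
  "jacobiP \<nu> \<mu> k x = Gamma (real k + \<nu> + 1) / (Gamma (real k + 1) * Gamma (\<nu> + 1)) *
     (\<Sum>j = 0..k. pochhammer (- real k) j * pochhammer (real k + \<nu> + \<mu> + 1) j
        / (pochhammer (\<nu> + 1) j * fact j) * ((1 - x) / 2) ^ j)"

end

theory Submission imports Defs "HOL-Computational_Algebra.Formal_Power_Series" begin

lemma neg_gchoose: "(-(real c + 1)) gchoose j = (-1)^j * real ((c+j) choose j)"
proof -
  have "(-(real c + 1)) gchoose j = (-1)^j * ((real j - (-(real c + 1)) - 1) gchoose j)"
    by (rule gbinomial_negated_upper)
  also have "real j - (-(real c + 1)) - 1 = real (c+j)" by simp
  finally show ?thesis by (simp add: binomial_gbinomial)
qed

lemma inner:
  fixes D Q r :: nat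
  shows "(\<Sum>j\<le>r. (-1)^j * real (Q choose (r-j)) * real ((D+Q+j) choose j)) = (-1)^r * real ((D+r) choose r)"
proof -
  have "(\<Sum>j\<le>r. (-1)^j * real (Q choose (r-j)) * real ((D+Q+j) choose j))
     = (\<Sum>j=0..r. ((-(real (D+Q) + 1)) gchoose j) * (real Q gchoose (r - j)))"
  proof (rule sum.cong)
    fix j assume "j \<in> {0..r}"
    have "(-(real (D+Q) + 1)) gchoose j = (-1)^j * real ((D+Q+j) choose j)"
      using neg_gchoose[of "D+Q" j] by simp
    then show "(-1)^j * real (Q choose (r-j)) * real ((D+Q+j) choose j)
        = ((-(real (D+Q) + 1)) gchoose j) * (real Q gchoose (r - j))"
      by (simp add: binomial_gbinomial)
  qed (simp add: atMost_atLeast0)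
  also have "\<dots> = ((-(real (D+Q) + 1)) + real Q) gchoose r" by (rule gbinomial_Vandermonde)
  also have "(-(real (D+Q) + 1)) + real Q = -(real D + 1)" by simp
  also have "(-(real D + 1)) gchoose r = (-1)^r * real ((D+r) choose r)" by (rule neg_gchoose)
  finally show ?thesis .
qed
lemma row_sum_ext: assumes "m \<le> k" shows "(\<Sum>i\<le>k. real (m choose i)) = 2^m"
proof -
  have "(\<Sum>i\<le>k. real (m choose i)) = (\<Sum>i\<le>m. real (m choose i))"
    by (rule sum.mono_neutral_right) (use assms in auto)
  also have "\<dots> = real (\<Sum>i\<le>m. m choose i)" by simp
  also have "\<dots> = 2^m" by (simp only: choose_row_sum) simp
  finally show ?thesis .
qed

lemma core:
  fixes k K a :: nat
  assumes "k \<le> K"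
  shows "(\<Sum>j\<le>k. (-1)^j * real (K choose (k-j)) * real ((K+a+j) choose j) * 2^(k-j))
       = (\<Sum>s\<le>k. (-1)^s * real (K choose (k-s)) * real ((a+k) choose s))"
proof -
  have "(\<Sum>j\<le>k. (-1)^j * real (K choose (k-j)) * real ((K+a+j) choose j) * 2^(k-j))
      = (\<Sum>j\<le>k. \<Sum>i\<le>k. (-1)^j * real (K choose (k-j)) * real ((k-j) choose i) * real ((K+a+j) choose j))"
  proof (rule sum.cong[OF refl])
    fix j assume "j \<in> {..k}"
    have "(\<Sum>i\<le>k. (-1)^j * real (K choose (k-j)) * real ((k-j) choose i) * real ((K+a+j) choose j))
       = (-1)^j * real (K choose (k-j)) * real ((K+a+j) choose j) * (\<Sum>i\<le>k. real ((k-j) choose i))"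
      by (simp add: sum_distrib_left sum_distrib_right mult_ac)
    also have "\<dots> = (-1)^j * real (K choose (k-j)) * real ((K+a+j) choose j) * 2^(k-j)"
      by (simp add: row_sum_ext)
    finally show "(-1)^j * real (K choose (k-j)) * real ((K+a+j) choose j) * 2^(k-j) =
       (\<Sum>i\<le>k. (-1)^j * real (K choose (k-j)) * real ((k-j) choose i) * real ((K+a+j) choose j))" ..
  qed
  also have "\<dots> = (\<Sum>i\<le>k. \<Sum>j\<le>k. (-1)^j * real (K choose (k-j)) * real ((k-j) choose i) * real ((K+a+j) choose j))"
    by (rule sum.swap)
  also have "\<dots> = (\<Sum>i\<le>k. real (K choose i) * (\<Sum>j\<le>k-i. (-1)^j * real ((K-i) choose ((k-i)-j)) * real ((a+i+(K-i)+j) choose j)))"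
  proof (rule sum.cong[OF refl])
    fix i assume i: "i \<in> {..k}"
    have "(\<Sum>j\<le>k. (-1)^j * real (K choose (k-j)) * real ((k-j) choose i) * real ((K+a+j) choose j))
        = (\<Sum>j\<le>k-i. (-1)^j * real (K choose (k-j)) * real ((k-j) choose i) * real ((K+a+j) choose j))"
      by (rule sum.mono_neutral_right) auto
    also have "\<dots> = (\<Sum>j\<le>k-i. real (K choose i) * ((-1)^j * real ((K-i) choose ((k-i)-j)) * real ((a+i+(K-i)+j) choose j)))"
    proof (rule sum.cong[OF refl])
      fix j assume j: "j \<in> {..k-i}"
      have cm: "(K choose (k-j)) * ((k-j) choose i) = (K choose i) * ((K-i) choose (k-j-i))"
        by (rule choose_mult) (use i j assms in auto)
      have e1: "a+i+(K-i)+j = K+a+j" using i assms by auto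
      have e2: "k-j-i = (k-i)-j" by simp
      show "(-1)^j * real (K choose (k-j)) * real ((k-j) choose i) * real ((K+a+j) choose j)
          = real (K choose i) * ((-1)^j * real ((K-i) choose ((k-i)-j)) * real ((a+i+(K-i)+j) choose j))"
        using arg_cong[OF cm, of real] unfolding e1 e2 of_nat_mult by (simp add: mult_ac)
    qed
    also have "\<dots> = real (K choose i) * (\<Sum>j\<le>k-i. (-1)^j * real ((K-i) choose ((k-i)-j)) * real ((a+i+(K-i)+j) choose j))"
      by (simp add: sum_distrib_left)
    finally show "(\<Sum>j\<le>k. (-1)^j * real (K choose (k-j)) * real ((k-j) choose i) * real ((K+a+j) choose j))
        = real (K choose i) * (\<Sum>j\<le>k-i. (-1)^j * real ((K-i) choose ((k-i)-j)) * real ((a+i+(K-i)+j) choose j))" .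
  qed
  also have "\<dots> = (\<Sum>i\<le>k. real (K choose i) * ((-1)^(k-i) * real ((a+i+(k-i)) choose (k-i))))"
    by (simp only: inner)
  also have "\<dots> = (\<Sum>i\<le>k. real (K choose i) * ((-1)^(k-i) * real ((a+k) choose (k-i))))"
    by (rule sum.cong) auto
  also have "\<dots> = (\<Sum>s\<le>k. real (K choose (k-s)) * ((-1)^(k-(k-s)) * real ((a+k) choose (k-(k-s)))))"
    unfolding atMost_atLeast0 by (subst sum.atLeastAtMost_rev) simp
  also have "\<dots> = (\<Sum>s\<le>k. (-1)^s * real (K choose (k-s)) * real ((a+k) choose s))"
    by (rule sum.cong) auto
  finally show ?thesis .
qed


lemma poch_shift: "pochhammer (real c + 1) j = fact (c+j) / fact c"
proof -
  have "pochhammer (1::real) (c+j) = pochhammer 1 c * pochhammer (1 + of_nat c) j"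
    by (rule pochhammer_product')
  then have "fact (c+j) = fact c * pochhammer (real c + 1) j"
    by (simp add: pochhammer_fact add.commute)
  then show ?thesis by (simp add: field_simps)
qed

lemma poch_neg: assumes "j \<le> k" shows "pochhammer (- real k) j = (-1)^j * fact k / fact (k-j)"
proof -
  have "pochhammer (- real k) j = (-1)^j * pochhammer (real k - of_nat j + 1) j"
    by (rule pochhammer_minus)
  also have "real k - of_nat j + 1 = real (k-j) + 1" using assms by (simp add: of_nat_diff)
  also have "pochhammer (real (k-j) + 1) j = fact k / fact (k-j)"
    using poch_shift[of "k-j" j] assms by simp
  finally show ?thesis by simp
qed

lemma gamma_nat: "Gamma (real c + 1) = fact c"
  using Gamma_fact[of c, where 'a=real] by (simp add: add.commute)

lemma jacobi_alt:
  fixes \<nu> a k :: nat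
  shows "jacobiP (real \<nu>) (real a) k 0 =
     (1/2)^k * (\<Sum>s\<le>k. (-1)^s * real ((k+\<nu>) choose (k-s)) * real ((a+k) choose s))"
proof -
  define K where "K = k + \<nu>"
  have pre: "Gamma (real k + real \<nu> + 1) / (Gamma (real k + 1) * Gamma (real \<nu> + 1))
      = fact K / (fact k * fact \<nu>)"
    using gamma_nat[of K] gamma_nat[of k] gamma_nat[of \<nu>] by (simp add: K_def)
  have "jacobiP (real \<nu>) (real a) k 0 =
     (\<Sum>j\<le>k. (1/2)^k * ((-1)^j * real (K choose (k-j)) * real ((K+a+j) choose j) * 2^(k-j)))"
    unfolding jacobiP_def pre atMost_atLeast0 sum_distrib_left
  proof (rule sum.cong[OF refl])
    fix j assume "j \<in> {0..k}"
    then have j: "j \<le> k" by simp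
    have p1: "pochhammer (- real k) j = (-1)^j * fact k / fact (k-j)" by (rule poch_neg[OF j])
    have p2: "pochhammer (real k + real \<nu> + real a + 1) j = fact (K+a+j) / fact (K+a)"
      using poch_shift[of "K+a" j] by (simp add: K_def add_ac)
    have p3: "pochhammer (real \<nu> + 1) j = fact (\<nu>+j) / fact \<nu>" by (rule poch_shift)
    have b1: "real (K choose (k-j)) = fact K / (fact (k-j) * fact (\<nu>+j))"
    proof -
      have "real (K choose (k-j)) = fact K / (fact (k-j) * fact (K-(k-j)))"
        by (rule binomial_fact) (simp add: K_def)
      moreover have "K - (k-j) = \<nu>+j" using j by (simp add: K_def)
      ultimately show ?thesis by simp
    qed
    have b2: "real ((K+a+j) choose j) = fact (K+a+j) / (fact j * fact (K+a))"
      using binomial_fact[of j "K+a+j", where 'a=real] by simp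
    have h2: "(2::real)^(k-j) = 2^k / 2^j" using j by (simp add: power_diff)
    show "fact K / (fact k * fact \<nu>) *
         (pochhammer (- real k) j * pochhammer (real k + real \<nu> + real a + 1) j /
          (pochhammer (real \<nu> + 1) j * fact j) * ((1 - 0) / 2) ^ j) =
         (1/2)^k * ((-1)^j * real (K choose (k-j)) * real ((K+a+j) choose j) * 2^(k-j))"
      unfolding p1 p2 p3 b1 b2 h2 by (simp add: field_simps power_divide)
  qed
  also have "\<dots> = (1/2)^k * (\<Sum>j\<le>k. (-1)^j * real (K choose (k-j)) * real ((K+a+j) choose j) * 2^(k-j))"
    by (simp add: sum_distrib_left)
  also have "\<dots> = (1/2)^k * (\<Sum>s\<le>k. (-1)^s * real (K choose (k-s)) * real ((a+k) choose s))"
    by (subst core) (simp_all add: K_def)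
  finally show ?thesis by (simp add: K_def)
qed


lemma sign_diff: assumes "b \<le> m" shows "(-1::real)^(m-b) = (-1)^m * (-1)^b"
proof -
  obtain d where m: "m = b + d" using assms le_Suc_ex by blast
  have "(-1::real)^m * (-1)^b = (-1)^d * ((-1)^b * (-1)^b)" by (simp add: m power_add)
  also have "(-1::real)^b * (-1)^b = 1" by (simp flip: power_add add: mult_2[symmetric])
  finally show ?thesis by (simp add: m)
qed

lemma J0: "jacobiP 0 (real a) k 0 = (1/2)^k * (\<Sum>s\<le>k. (-1)^s * real (k choose s) * real ((a+k) choose s))"
proof -
  have "jacobiP (real 0) (real a) k 0 = (1/2)^k * (\<Sum>s\<le>k. (-1)^s * real ((k+0) choose (k-s)) * real ((a+k) choose s))"
    by (rule jacobi_alt)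
  also have "(\<Sum>s\<le>k. (-1)^s * real ((k+0) choose (k-s)) * real ((a+k) choose s)) = (\<Sum>s\<le>k. (-1)^s * real (k choose s) * real ((a+k) choose s))"
    by (rule sum.cong) (auto simp: binomial_symmetric[symmetric])
  finally show ?thesis by simp
qed

lemma J1: "jacobiP 1 (real a) k 0 = (1/2)^k * (\<Sum>s\<le>k. (-1)^s * real (Suc k choose Suc s) * real ((a+k) choose s))"
proof -
  have "jacobiP (real 1) (real a) k 0 = (1/2)^k * (\<Sum>s\<le>k. (-1)^s * real ((k+1) choose (k-s)) * real ((a+k) choose s))"
    by (rule jacobi_alt)
  also have "(\<Sum>s\<le>k. (-1)^s * real ((k+1) choose (k-s)) * real ((a+k) choose s)) = (\<Sum>s\<le>k. (-1)^s * real (Suc k choose Suc s) * real ((a+k) choose s))"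
  proof (rule sum.cong[OF refl])
    fix s assume "s \<in> {..k}"
    then have "(k+1) choose (k-s) = (k+1) choose ((k+1) - (k-s))" by (intro binomial_symmetric) auto
    moreover have "(k+1) - (k-s) = Suc s" using \<open>s \<in> {..k}\<close> by auto
    ultimately show "(-1)^s * real ((k+1) choose (k-s)) * real ((a+k) choose s) = (-1)^s * real (Suc k choose Suc s) * real ((a+k) choose s)" by simp
  qed
  finally show ?thesis by simp
qed

theorem mainTheorem8:
  fixes n l :: nat
  assumes "n \<ge> 2" and "1 \<le> l" and "l \<le> n div 2"
  shows "pH n l (n - l) = (1 / sqrt 2) ^ (n - 2 * l + 1) * (-1) ^ (n - l) *
           (jacobiP 0 (real (n - 2 * l)) (l - 1) 0 - jacobiP 1 (real (n - 2 * l)) (l - 1) 0) \<and>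
         qH n l (n - l) = (1 / sqrt 2) ^ (n - 2 * l + 1) * (-1) ^ (n - l) *
           ((real (n - l) / real l) * jacobiP 1 (real (n - 2 * l)) (l - 1) 0 - jacobiP 0 (real (n - 2 * l)) (l - 1) 0)"
proof -
  obtain k where l: "l = Suc k" using assms(2) by (cases l) auto
  have "2 * l \<le> n" using assms(3) by linarith
  then obtain a where n: "n = 2 * Suc k + a" using l le_Suc_ex by blast
  define M where "M = k + a"
  define c where "c = (1 / sqrt 2) ^ (a + 1)"
  have nl: "n - l = Suc M" and n2l: "n - 2 * l = a" and l1: "l - 1 = k" and n1: "n - 1 = 2*k + (a+1)"
    using n l by (auto simp: M_def)
  have pw: "(1 / sqrt 2) ^ (n - 1) = c * (1/2)^k"
  proof -
    have "(1 / sqrt (2::real)) ^ (2*k) = (1/2)^k"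
      by (simp add: power_mult power_divide)
    then show ?thesis unfolding n1 c_def power_add by simp
  qed
  have pw2: "(1 / sqrt 2) ^ (n - 2 * l + 1) = c" unfolding n2l c_def ..
  have aM: "a + k = M" by (simp add: M_def)
  have Sp: "(\<Sum>\<gamma> = 1..min (l - 1) (n - l). (-1) ^ (n - l - \<gamma>) * real ((l - 1) choose \<gamma>) * real ((n - l - 1) choose (\<gamma> - 1)))
     = (-1)^Suc M * (\<Sum>s\<le>k. (-1)^s * real (k choose s) * real (M choose s) - (-1)^s * real (Suc k choose Suc s) * real (M choose s))"
  proof -
    have mk: "min k (Suc M) = k" by (simp add: M_def)
    have "(\<Sum>\<gamma> = 1..k. (-1) ^ (Suc M - \<gamma>) * real (k choose \<gamma>) * real (M choose (\<gamma> - 1)))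
        = (\<Sum>\<gamma> = Suc 0..Suc k. (-1) ^ (Suc M - \<gamma>) * real (k choose \<gamma>) * real (M choose (\<gamma> - 1)))"
      by (simp add: sum.cl_ivl_Suc)
    also have "\<dots> = (\<Sum>s = 0..k. (-1) ^ (Suc M - Suc s) * real (k choose Suc s) * real (M choose s))"
      by (subst sum.shift_bounds_cl_Suc_ivl) simp
    also have "\<dots> = (\<Sum>s\<le>k. (-1)^Suc M * ((-1)^s * real (k choose s) * real (M choose s) - (-1)^s * real (Suc k choose Suc s) * real (M choose s)))"
      unfolding atMost_atLeast0
    proof (rule sum.cong[OF refl])
      fix s assume "s \<in> {0..k}"
      then have "Suc s \<le> Suc M" by (simp add: M_def)
      then show "(-1) ^ (Suc M - Suc s) * real (k choose Suc s) * real (M choose s) =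
          (-1)^Suc M * ((-1)^s * real (k choose s) * real (M choose s) - (-1)^s * real (Suc k choose Suc s) * real (M choose s))"
        by (simp only: sign_diff) (simp add: algebra_simps)
    qed
    finally show ?thesis unfolding nl l1 mk by (simp add: sum_distrib_left)
  qed
  have P: "pH n l (n - l) = (1 / sqrt 2) ^ (n - 2 * l + 1) * (-1) ^ (n - l) *
           (jacobiP 0 (real (n - 2 * l)) (l - 1) 0 - jacobiP 1 (real (n - 2 * l)) (l - 1) 0)"
    unfolding pH_def Sp unfolding pw pw2 n2l l1 nl J0 J1 aM c_def[symmetric]
    by (simp only: sum_subtractf) (simp add: algebra_simps del: binomial_Suc_Suc)
  have key: "real (Suc M) / real (Suc k) * real (Suc k choose Suc s) * real (M choose s) - real (k choose s) * real (M choose s)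
      = real (k choose s) * real (M choose Suc s)" for s
  proof -
    have e1: "real (Suc s) * real (Suc k choose Suc s) = real (Suc k) * real (k choose s)"
      using arg_cong[OF Suc_times_binomial[of s k], of real] by (simp only: of_nat_mult)
    have e2: "real (Suc s) * real (Suc M choose Suc s) = real (Suc M) * real (M choose s)"
      using arg_cong[OF Suc_times_binomial[of s M], of real] by (simp only: of_nat_mult)
    have "real (Suc M) / real (Suc k) * real (Suc k choose Suc s) * real (M choose s)
        = real (k choose s) * real (Suc M choose Suc s)"
    proof -
      have "real (Suc M) / real (Suc k) * real (Suc k choose Suc s) * real (M choose s) * (real (Suc k) * real (Suc s))
          = real (Suc M) * real (M choose s) * (real (Suc s) * real (Suc k choose Suc s))"
        by (simp add: field_simps)
      also have "\<dots> = real (k choose s) * real (Suc M choose Suc s) * (real (Suc k) * real (Suc s))"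
        unfolding e1 e2[symmetric] by (simp add: algebra_simps)
      finally have "real (Suc M) / real (Suc k) * real (Suc k choose Suc s) * real (M choose s) * (real (Suc k) * real (Suc s))
          = real (k choose s) * real (Suc M choose Suc s) * (real (Suc k) * real (Suc s))" .
      then show ?thesis by (subst (asm) mult_right_cancel) (simp_all del: binomial_Suc_Suc of_nat_Suc)
    qed
    then show ?thesis by (simp add: algebra_simps)
  qed
  have Sq: "(\<Sum>\<gamma> = 1..min l (n - l - 1). (-1) ^ (n - l - \<gamma> - 1) * real ((l - 1) choose (\<gamma> - 1)) * real ((n - l - 1) choose \<gamma>))
     = (-1)^Suc M * (\<Sum>s\<le>k. (-1)^s * (real (Suc M) / real (Suc k) * real (Suc k choose Suc s) * real (M choose s) - real (k choose s) * real (M choose s)))"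
  proof -
    have "(\<Sum>\<gamma> = 1..min (Suc k) M. (-1) ^ (Suc M - \<gamma> - 1) * real (k choose (\<gamma> - 1)) * real (M choose \<gamma>))
        = (\<Sum>\<gamma> = Suc 0..Suc k. (-1) ^ (Suc M - \<gamma> - 1) * real (k choose (\<gamma> - 1)) * real (M choose \<gamma>))"
      by (rule sum.mono_neutral_left) auto
    also have "\<dots> = (\<Sum>s = 0..k. (-1) ^ (Suc M - Suc s - 1) * real (k choose s) * real (M choose Suc s))"
      by (subst sum.shift_bounds_cl_Suc_ivl) simp
    also have "\<dots> = (\<Sum>s\<le>k. (-1)^Suc M * ((-1)^s * (real (k choose s) * real (M choose Suc s))))"
      unfolding atMost_atLeast0
    proof (rule sum.cong[OF refl])
      fix s assume "s \<in> {0..k}"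
      show "(-1) ^ (Suc M - Suc s - 1) * real (k choose s) * real (M choose Suc s) =
          (-1)^Suc M * ((-1)^s * (real (k choose s) * real (M choose Suc s)))"
      proof (cases "Suc s \<le> M")
        case True
        then have "Suc M - Suc s - 1 = M - Suc s" by simp
        then show ?thesis using True by (simp only: sign_diff) (simp add: algebra_simps)
      next
        case False
        then have "M choose Suc s = 0" by (intro binomial_eq_0) simp
        then show ?thesis by (simp only: of_nat_0 mult_zero_right mult_zero_left minus_zero)
      qed
    qed
    finally show ?thesis unfolding nl l1 key unfolding l by (simp add: sum_distrib_left)
  qed
  have Q: "qH n l (n - l) = (1 / sqrt 2) ^ (n - 2 * l + 1) * (-1) ^ (n - l) *
           ((real (n - l) / real l) * jacobiP 1 (real (n - 2 * l)) (l - 1) 0 - jacobiP 0 (real (n - 2 * l)) (l - 1) 0)"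
    unfolding qH_def Sq unfolding pw pw2 n2l l1 nl J0 J1 aM c_def[symmetric]
    by (simp add: sum_subtractf sum_distrib_left algebra_simps l)
  show ?thesis using P Q by blast
qed

end
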